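(* For every $n\ge2$, the identity $x^2=x^3$ holds in the inverse semigroup $(S_n,\cdot,{}^{-1})$.
   Context: For $n\ge2$, $(S_n,\cdot,{}^{-1})$ is the inverse semigroup of partial one-to-one transformations of $\{0,1,\dots,3n+2\}$ (acting on the right, composition $x(\alpha\beta)=(x\alpha)\beta$) generated by the partial maps $\chi:\ n\mapsto 2n+1,\ n+1\mapsto 2n+2$ and, for $i=1,\dots,n$, $\chi_i:\ i-1\mapsto i,\ n+1+i\mapsto n+i,\ 2n+1+i\mapsto 2n+2+i$ (each undefined elsewhere). *)

theory Defs
  imports Main
begin

(* Partial one-to-one transformations are modelled as partial maps
  nat => nat option.  Maps act on the right: x(ab) = (xa)b,
  so the product a.b is map composition b o_m a. *)

definition pmul :: "(nat \<rightharpoonup> nat) \<Rightarrow> (nat \<rightharpoonup> nat) \<Rightarrow> (nat \<rightharpoonup> nat)" where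
  "pmul \<alpha> \<beta> = \<beta> \<circ>\<^sub>m \<alpha>"

definition pinv :: "(nat \<rightharpoonup> nat) \<Rightarrow> (nat \<rightharpoonup> nat)" where
  "pinv \<alpha> = (\<lambda>y. if \<exists>x. \<alpha> x = Some y then Some (THE x. \<alpha> x = Some y) else None)"

definition gen_chi :: "nat \<Rightarrow> (nat \<rightharpoonup> nat)" where
  "gen_chi n = [n \<mapsto> 2*n+1, n+1 \<mapsto> 2*n+2]"

definition gen_chi_i :: "nat \<Rightarrow> nat \<Rightarrow> (nat \<rightharpoonup> nat)" where
  "gen_chi_i n i = [i-1 \<mapsto> i, n+1+i \<mapsto> n+i, 2*n+1+i \<mapsto> 2*n+2+i]"

inductive_set S :: "nat \<Rightarrow> (nat \<rightharpoonup> nat) set" for n :: nat where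
  gen_chi: "gen_chi n \<in> S n"
| gen_chi_i: "1 \<le> i \<Longrightarrow> i \<le> n \<Longrightarrow> gen_chi_i n i \<in> S n"
| mul: "\<alpha> \<in> S n \<Longrightarrow> \<beta> \<in> S n \<Longrightarrow> pmul \<alpha> \<beta> \<in> S n"
| inv: "\<alpha> \<in> S n \<Longrightarrow> pinv \<alpha> \<in> S n"

end

theory Submission
  imports Defs
begin

definition pos :: "nat \<Rightarrow> nat \<Rightarrow> int" where
  "pos n p = (if p \<le> n then int p else if p \<le> 2*n+1 then int (3*n+2) - int p else int p)"

lemma pos_inj: "pos n p = pos n q \<Longrightarrow> p = q"
  by (auto simp: pos_def split: if_splits)

definition PU :: "int \<Rightarrow> int \<Rightarrow> int \<Rightarrow> bool" where
  "PU n a b = ((\<exists>j. 0 \<le> j \<and> j \<le> n-1 \<and> (a = j \<or> a = 2*n-j \<or> a = 2*n+2+j)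
      \<and> (b = j \<or> b = 2*n-j \<or> b = 2*n+2+j)) \<or> (a = n \<and> b = 2*n+1) \<or> (a = 2*n+1 \<and> b = n))"

definition PA :: "int \<Rightarrow> int \<Rightarrow> int \<Rightarrow> int \<Rightarrow> bool" where
  "PA n a b k = (k = 0 \<or> (\<bar>a-b\<bar> = 2*n+2 \<and> 0 \<le> min a b \<and> min a b \<le> n \<and> 0 \<le> min a b + k \<and> min a b + k \<le> n)
     \<or> (k = 1 \<and> PU n a b) \<or> (k = -1 \<and> PU n (a-1) (b-1)))"

lemma PU_diff: "n \<ge> 2 \<Longrightarrow> a \<noteq> b \<Longrightarrow> PU n a b \<Longrightarrow> \<bar>a-b\<bar> = 2*n+2 \<Longrightarrow> 0 \<le> min a b \<and> min a b \<le> n-1"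
  unfolding PU_def by auto

lemma PU_adj: "n \<ge> 2 \<Longrightarrow> \<bar>a-b\<bar> = 1 \<Longrightarrow> PU n a b \<Longrightarrow> False"
  unfolding PU_def by auto

lemma PU_shift: "n \<ge> 2 \<Longrightarrow> a \<noteq> b \<Longrightarrow> PU n a b \<Longrightarrow> PU n (a+1) (b+1) \<Longrightarrow> \<bar>a-b\<bar> = 2*n+2 \<and> 0 \<le> min a b \<and> min a b + 2 \<le> n"
  unfolding PU_def by auto

lemma PA_inv: "PA n a b k \<Longrightarrow> PA n (a+k) (b+k) (-k)"
  unfolding PA_def by (auto simp: min_def)

lemma PA_comp: assumes "n \<ge> 2" "a \<noteq> b" "PA n a b k" "PA n (a+k) (b+k) l" shows "PA n a b (k+l)"
proof -
  have m: "min (a+k) (b+k) = min a b + k" by (simp add: min_def)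
  have d: "\<bar>(a+k)-(b+k)\<bar> = \<bar>a-b\<bar>" by simp
  from assms(3)[unfolded PA_def] show ?thesis
  proof (elim disjE conjE)
    assume "k = 0" thus ?thesis using assms(4) by simp
  next
    assume W: "\<bar>a-b\<bar> = 2*n+2" "0 \<le> min a b" "min a b \<le> n" "0 \<le> min a b + k" "min a b + k \<le> n"
    from assms(4)[unfolded PA_def] show ?thesis
    proof (elim disjE conjE)
      assume "l = 0" thus ?thesis using W unfolding PA_def by simp
    next
      assume "\<bar>a + k - (b + k)\<bar> = 2 * n + 2" "0 \<le> min (a + k) (b + k)" "min (a + k) (b + k) \<le> n"
        "0 \<le> min (a + k) (b + k) + l" "min (a + k) (b + k) + l \<le> n"
      thus ?thesis using W m unfolding PA_def by auto
    next
      assume "l = 1" "PU n (a + k) (b + k)"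
      with PU_diff[of n "a+k" "b+k"] assms W m show ?thesis unfolding PA_def by auto
    next
      assume "l = -1" "PU n (a + k - 1) (b + k - 1)"
      with PU_diff[of n "a+k-1" "b+k-1"] assms W show ?thesis unfolding PA_def by (auto simp: min_def)
    qed
  next
    assume U: "k = 1" "PU n a b"
    from assms(4)[unfolded PA_def] show ?thesis
    proof (elim disjE conjE)
      assume "l = 0" thus ?thesis using U unfolding PA_def by simp
    next
      assume "\<bar>a + k - (b + k)\<bar> = 2 * n + 2" "0 \<le> min (a + k) (b + k)" "min (a + k) (b + k) \<le> n"
        "0 \<le> min (a + k) (b + k) + l" "min (a + k) (b + k) + l \<le> n"
      with PU_diff[of n a b] assms U m show ?thesis unfolding PA_def by auto
    next
      assume "l = 1" "PU n (a + k) (b + k)"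
      with PU_shift[of n a b] assms U show ?thesis unfolding PA_def by auto
    next
      assume "l = -1" thus ?thesis using U unfolding PA_def by simp
    qed
  next
    assume V: "k = -1" "PU n (a-1) (b-1)"
    from assms(4)[unfolded PA_def] show ?thesis
    proof (elim disjE conjE)
      assume "l = 0" thus ?thesis using V unfolding PA_def by simp
    next
      assume "\<bar>a + k - (b + k)\<bar> = 2 * n + 2" "0 \<le> min (a + k) (b + k)" "min (a + k) (b + k) \<le> n"
        "0 \<le> min (a + k) (b + k) + l" "min (a + k) (b + k) + l \<le> n"
      with PU_diff[of n "a-1" "b-1"] assms V m show ?thesis unfolding PA_def by (auto simp: min_def)
    next
      assume "l = 1" thus ?thesis using V unfolding PA_def by simp
    next
      assume "l = -1" "PU n (a + k - 1) (b + k - 1)"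
      with PU_shift[of n "a-2" "b-2"] assms V show ?thesis unfolding PA_def by (auto simp: algebra_simps min_def)
    qed
  qed
qed

lemma PA_Q: "n \<ge> 2 \<Longrightarrow> k \<noteq> 0 \<Longrightarrow> PA n a (a+k) k \<Longrightarrow> False"
  unfolding PA_def using PU_adj[of n a "a+1"] PU_adj[of n "a-1" "a-2"]
  by (auto simp: min_def)

definition Inv :: "nat \<Rightarrow> (nat \<rightharpoonup> nat) \<Rightarrow> bool" where
  "Inv n x = (\<forall>p p' q q'. x p = Some p' \<longrightarrow> x q = Some q' \<longrightarrow> p \<noteq> q \<longrightarrow>
     PA (int n) (pos n p) (pos n q) (pos n p' - pos n p) \<and> pos n p' - pos n p = pos n q' - pos n q)"

lemma Inv_inj: "Inv n x \<Longrightarrow> x p = Some r \<Longrightarrow> x q = Some r \<Longrightarrow> p = q"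
  unfolding Inv_def by (metis diff_left_imp_eq pos_inj)

lemma pinv_Some: assumes "Inv n x" shows "pinv x y = Some z \<longleftrightarrow> x z = Some y"
proof
  assume h: "pinv x y = Some z"
  then have ex: "\<exists>w. x w = Some y" unfolding pinv_def by (auto split: if_splits)
  then obtain w where w: "x w = Some y" by blast
  have "(THE w. x w = Some y) = w" using w Inv_inj[OF assms] by blast
  then show "x z = Some y" using h ex w unfolding pinv_def by auto
next
  assume h: "x z = Some y"
  have "(THE w. x w = Some y) = z" using h Inv_inj[OF assms] by blast
  then show "pinv x y = Some z" using h unfolding pinv_def by auto
qed

lemma Inv_pinv: assumes "Inv n x" shows "Inv n (pinv x)"
  unfolding Inv_def
proof (intro allI impI)
  fix p p' q q' assume a: "pinv x p = Some p'" "pinv x q = Some q'" "p \<noteq> q"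
  have x: "x p' = Some p" "x q' = Some q" using a pinv_Some[OF assms] by auto
  have ne: "p' \<noteq> q'" using x a(3) by auto
  have h: "PA (int n) (pos n p') (pos n q') (pos n p - pos n p')" "pos n p - pos n p' = pos n q - pos n q'"
    using assms x ne unfolding Inv_def by blast+
  have e1: "pos n p' + (pos n p - pos n p') = pos n p" by simp
  have e2: "pos n q' + (pos n p - pos n p') = pos n q" using h(2) by simp
  have e3: "- (pos n p - pos n p') = pos n p' - pos n p" by simp
  from PA_inv[OF h(1)] have "PA (int n) (pos n p) (pos n q) (pos n p' - pos n p)"
    unfolding e1 e2 e3 .
  with h(2) show "PA (int n) (pos n p) (pos n q) (pos n p' - pos n p) \<and> pos n p' - pos n p = pos n q' - pos n q"
    by simp
qed

lemma Inv_pmul: assumes "n \<ge> 2" "Inv n x" "Inv n y" shows "Inv n (pmul x y)"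
  unfolding Inv_def
proof (intro allI impI)
  fix p p2 q q2 assume a: "pmul x y p = Some p2" "pmul x y q = Some q2" "p \<noteq> q"
  obtain p1 where p1: "x p = Some p1" "y p1 = Some p2" using a(1) unfolding pmul_def map_comp_def
    by (auto split: option.splits)
  obtain q1 where q1: "x q = Some q1" "y q1 = Some q2" using a(2) unfolding pmul_def map_comp_def
    by (auto split: option.splits)
  have ne: "p1 \<noteq> q1" using Inv_inj[OF assms(2)] p1 q1 a(3) by metis
  have hx: "PA (int n) (pos n p) (pos n q) (pos n p1 - pos n p)" "pos n p1 - pos n p = pos n q1 - pos n q"
    using assms(2) p1 q1 a(3) unfolding Inv_def by blast+
  have hy: "PA (int n) (pos n p1) (pos n q1) (pos n p2 - pos n p1)" "pos n p2 - pos n p1 = pos n q2 - pos n q1"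
    using assms(3) p1 q1 ne unfolding Inv_def by blast+
  have pq: "pos n p \<noteq> pos n q" using a(3) pos_inj by blast
  have c: "PA (int n) (pos n p) (pos n q) ((pos n p1 - pos n p) + (pos n p2 - pos n p1))"
  proof (rule PA_comp[OF _ pq hx(1)])
    show "2 \<le> int n" using assms(1) by simp
    have e1: "pos n p + (pos n p1 - pos n p) = pos n p1" by simp
    have e2: "pos n q + (pos n p1 - pos n p) = pos n q1" using hx(2) by simp
    show "PA (int n) (pos n p + (pos n p1 - pos n p)) (pos n q + (pos n p1 - pos n p)) (pos n p2 - pos n p1)"
      unfolding e1 e2 by (rule hy(1))
  qed
  have e: "(pos n p1 - pos n p) + (pos n p2 - pos n p1) = pos n p2 - pos n p" by simp
  have "PA (int n) (pos n p) (pos n q) (pos n p2 - pos n p)" using c unfolding e .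
  then show "PA (int n) (pos n p) (pos n q) (pos n p2 - pos n p) \<and> pos n p2 - pos n p = pos n q2 - pos n q"
    using hx(2) hy(2) by simp
qed

lemma Inv_chi: assumes "n \<ge> 2" shows "Inv n (gen_chi n)"
  unfolding Inv_def
proof (intro allI impI)
  fix p p' q q' assume a: "gen_chi n p = Some p'" "gen_chi n q = Some q'" "p \<noteq> q"
  have c: "\<And>p p'. gen_chi n p = Some p' \<Longrightarrow> (p = n \<and> p' = 2*n+1 \<or> p = n+1 \<and> p' = 2*n+2)"
    unfolding gen_chi_def by (auto split: if_splits)
  have pp: "\<And>p p'. gen_chi n p = Some p' \<Longrightarrow> pos n p' - pos n p = 1 \<and>
     (pos n p = int n \<or> pos n p = 2*int n+1)"
    using assms by (drule_tac c) (auto simp: pos_def)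
  have "pos n p \<noteq> pos n q" using a(3) pos_inj by blast
  then show "PA (int n) (pos n p) (pos n q) (pos n p' - pos n p) \<and> pos n p' - pos n p = pos n q' - pos n q"
    using pp[OF a(1)] pp[OF a(2)] unfolding PA_def PU_def by auto
qed

lemma PU_I: "0 \<le> j \<Longrightarrow> j \<le> n-1 \<Longrightarrow> (a = j \<or> a = 2*n-j \<or> a = 2*n+2+j)
      \<Longrightarrow> (b = j \<or> b = 2*n-j \<or> b = 2*n+2+j) \<Longrightarrow> PU n a b"
  unfolding PU_def by blast

lemma Inv_chi_i: assumes "n \<ge> 2" "1 \<le> i" "i \<le> n" shows "Inv n (gen_chi_i n i)"
  unfolding Inv_def
proof (intro allI impI)
  fix p p' q q' assume a: "gen_chi_i n i p = Some p'" "gen_chi_i n i q = Some q'" "p \<noteq> q"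
  have c: "\<And>p p'. gen_chi_i n i p = Some p' \<Longrightarrow> (p = i-1 \<and> p' = i \<or> p = n+1+i \<and> p' = n+i \<or> p = 2*n+1+i \<and> p' = 2*n+2+i)"
    unfolding gen_chi_i_def by (auto split: if_splits)
  have pp: "\<And>p p'. gen_chi_i n i p = Some p' \<Longrightarrow> pos n p' - pos n p = 1 \<and>
     (pos n p = int i - 1 \<or> pos n p = 2*int n - (int i - 1) \<or> pos n p = 2*int n+2+(int i - 1))"
    using assms by (drule_tac c) (auto simp: pos_def)
  show "PA (int n) (pos n p) (pos n q) (pos n p' - pos n p) \<and> pos n p' - pos n p = pos n q' - pos n q"
    using pp[OF a(1)] pp[OF a(2)] PU_I[of "int i - 1" "int n" "pos n p" "pos n q"] assms
    unfolding PA_def by simp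
qed

lemma Inv_S: "x \<in> S n \<Longrightarrow> n \<ge> 2 \<Longrightarrow> Inv n x"
  by (induction rule: S.induct) (auto intro: Inv_chi Inv_chi_i Inv_pmul Inv_pinv)

theorem corollary5p2:
  fixes n :: nat and x :: "nat \<rightharpoonup> nat"
  assumes "n \<ge> 2" and "x \<in> S n"
  shows "pmul x x = pmul (pmul x x) x"
proof -
  have I: "Inv n x" using Inv_S assms by blast
  have Q: "p = q" if "x p = Some q" "x q = Some r" for p q r
  proof (rule ccontr)
    assume ne: "p \<noteq> q"
    have h: "PA (int n) (pos n p) (pos n q) (pos n q - pos n p)" "pos n q - pos n p = pos n r - pos n q"
      using I that ne unfolding Inv_def by blast+
    have k: "pos n q - pos n p \<noteq> 0" using ne pos_inj by (metis eq_iff_diff_eq_0)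
    have "PA (int n) (pos n p) (pos n p + (pos n q - pos n p)) (pos n q - pos n p)" using h(1) by simp
    from PA_Q[OF _ k this] assms(1) show False by simp
  qed
  show ?thesis
  proof (rule ext)
    fix p
    show "pmul x x p = pmul (pmul x x) x p"
    proof (cases "x p")
      case None thus ?thesis by (simp add: pmul_def map_comp_def)
    next
      case (Some q)
      show ?thesis
      proof (cases "x q")
        case None thus ?thesis using Some by (simp add: pmul_def map_comp_def)
      next
        case (Some r)
        have "p = q" using Q \<open>x p = Some q\<close> Some by blast
        thus ?thesis using Some \<open>x p = Some q\<close> by (simp add: pmul_def map_comp_def)
      qed
    qed
  qed
qed

end
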